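(* Let $K$ be a finite simplicial complex, let $q$ and $p$ be non-negative integers, and for each $m$ let $\{\sigma^{(m)}_1,\dots,\sigma^{(m)}_{f_m}\}$ be the $m$-simplices of $K$ ($f_m$ their number). Then for every $q$-simplex $\sigma_j^{(q)}$: (1) $$\deg^p_A(\sigma_j^{(q)})=\sum_{q'=p}^{\dim K}\sum_{k=1}^{f_{q'}} adj^p(\sigma_j^{(q)},\sigma_k^{(q')});$$ (2) $$\deg^{p^*}_A(\sigma_j^{(q)})=\deg^p_A(\sigma_j^{(q)})-\sum_{q'=p}^{\dim K}\sum_{k=1}^{f_{q'}}\Delta_{q',k},$$ where $$\Delta_{q',k}=\min\Big(1,\sum_{q''=q'+1}^{\dim K}\sum_{\ell=1}^{f_{q''}}|\operatorname{sig}_L(\sigma^{(q')}_k,\sigma_\ell^{(q'')};\sigma_k^{(q')})|\cdot adj^p(\sigma_j^{(q)},\sigma_\ell^{(q'')})\Big)\cdot adj^p(\sigma_j^{(q)},\sigma_k^{(q')}).$$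
   Context: $K$ is a finite abstract simplicial complex (finite family of nonempty finite vertex sets closed under nonempty subsets); a $q$-simplex has $q+1$ vertices; a face is a simplex of $K$ contained in a given simplex (a simplex is a face of itself); $\dim K$ is the maximal dimension of a simplex. Adjacencies: $\sigma^{(q)}\sim_{L_p}\sigma^{(q')}$ iff they have a common $p$-face; $\sigma^{(q)}\sim_{L_{p^*}}\sigma^{(q')}$ iff $\sigma^{(q)}\sim_{L_p}\sigma^{(q')}$ and $\sigma^{(q)}\not\sim_{L_{p+1}}\sigma^{(q')}$; $\sigma^{(q)}\sim_{U_p}\sigma^{(q')}$ iff some $p$-simplex of $K$ contains both. $p$-adjacency: $\sigma^{(q)}\sim_{A_p}\sigma^{(q')}$ iff $\sigma^{(q)}\sim_{L_{p^*}}\sigma^{(q')}$ and $\sigma^{(q)}\not\sim_{U_{p'}}\sigma^{(q')}$, where $p'=q+q'-p$. Maximal $p$-adjacency: $\sigma^{(q')}\sim_{A_{p^*}}\sigma^{(q)}$ iff $\sigma^{(q')}\sim_{A_p}\sigma^{(q)}$ and $\sigma^{(q')}\not\subset\sigma^{(q'')}$ for every simplex $\sigma^{(q'')}$ with $\sigma^{(q'')}\sim_{A_p}\sigma^{(q)}$. The $p$-adjacency degree is $\deg^p_A(\sigma^{(q)})=\#\{\sigma^{(q')}:\sigma^{(q)}\sim_{A_p}\sigma^{(q')}\}$ and the maximal $p$-adjacency degree is $\deg^{p^*}_A(\sigma^{(q)})=\#\{\sigma^{(q')}:\sigma^{(q')}\sim_{A_{p^*}}\sigma^{(q)}\}$ (over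 simplices of all dimensions $q'$). Indicator quantities: $m_L^p(\sigma,\sigma')=1$ if $\sigma,\sigma'$ have a common $p$-face and $0$ otherwise (equivalently $\min(1,\sum_i|\operatorname{sig}_L(\sigma,\sigma';\gamma_i^{(p)})|)$ over all $p$-simplices $\gamma_i^{(p)}$); $m_U^{p}(\sigma,\sigma')=1$ if some $p$-simplex contains both and $0$ otherwise. For $\sigma=\sigma^{(q)}$, $\sigma'=\sigma^{(q')}$ and $p'=q+q'-p$, $adj^p(\sigma,\sigma')=m^p_L(\sigma,\sigma')\big(1-m^{p+1}_L(\sigma,\sigma')\big)\big(1-m^{p'}_U(\sigma,\sigma')\big)$. Here $|\operatorname{sig}_L(\sigma,\sigma';\tau)|$ equals $1$ if $\tau\subseteq\sigma\cap\sigma'$ and $0$ otherwise; in particular $|\operatorname{sig}_L(\sigma_k^{(q')},\sigma_\ell^{(q'')};\sigma_k^{(q')})|=1$ iff $\sigma_k^{(q')}\subseteq\sigma_\ell^{(q'')}$. *)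

theory Defs
  imports Main
begin

definition simplicial_complex :: "'a set set \<Rightarrow> bool" where
  "simplicial_complex K \<longleftrightarrow> finite K \<and> (\<forall>s\<in>K. finite s \<and> s \<noteq> {}) \<and>
     (\<forall>s\<in>K. \<forall>t. t \<subseteq> s \<and> t \<noteq> {} \<longrightarrow> t \<in> K)"

definition sdim :: "'a set \<Rightarrow> nat" where
  "sdim s = card s - 1"

definition simplices :: "'a set set \<Rightarrow> nat \<Rightarrow> 'a set set" where
  "simplices K q = {s \<in> K. card s = q + 1}"

definition cdim :: "'a set set \<Rightarrow> nat" where
  "cdim K = Max (sdim ` K)"

definition L_adj :: "'a set set \<Rightarrow> nat \<Rightarrow> 'a set \<Rightarrow> 'a set \<Rightarrow> bool" where
  "L_adj K p s s' \<longleftrightarrow> (\<exists>t\<in>K. card t = p + 1 \<and> t \<subseteq> s \<and> t \<subseteq> s')"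

definition Lstar_adj :: "'a set set \<Rightarrow> nat \<Rightarrow> 'a set \<Rightarrow> 'a set \<Rightarrow> bool" where
  "Lstar_adj K p s s' \<longleftrightarrow> L_adj K p s s' \<and> \<not> L_adj K (p + 1) s s'"

definition U_adj :: "'a set set \<Rightarrow> nat \<Rightarrow> 'a set \<Rightarrow> 'a set \<Rightarrow> bool" where
  "U_adj K p s s' \<longleftrightarrow> (\<exists>t\<in>K. card t = p + 1 \<and> s \<subseteq> t \<and> s' \<subseteq> t)"

definition A_adj :: "'a set set \<Rightarrow> nat \<Rightarrow> 'a set \<Rightarrow> 'a set \<Rightarrow> bool" where
  "A_adj K p s s' \<longleftrightarrow> Lstar_adj K p s s' \<and> \<not> U_adj K (sdim s + sdim s' - p) s s'"

definition Astar_adj :: "'a set set \<Rightarrow> nat \<Rightarrow> 'a set \<Rightarrow> 'a set \<Rightarrow> bool" where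
  "Astar_adj K p s' s \<longleftrightarrow> A_adj K p s' s \<and>
     (\<forall>s''\<in>K. A_adj K p s'' s \<longrightarrow> \<not> s' \<subset> s'')"

definition degA :: "'a set set \<Rightarrow> nat \<Rightarrow> 'a set \<Rightarrow> nat" where
  "degA K p s = card {s' \<in> K. A_adj K p s s'}"

definition degAstar :: "'a set set \<Rightarrow> nat \<Rightarrow> 'a set \<Rightarrow> nat" where
  "degAstar K p s = card {s' \<in> K. Astar_adj K p s' s}"

definition mL :: "'a set set \<Rightarrow> nat \<Rightarrow> 'a set \<Rightarrow> 'a set \<Rightarrow> nat" where
  "mL K p s s' = (if L_adj K p s s' then 1 else 0)"

definition mU :: "'a set set \<Rightarrow> nat \<Rightarrow> 'a set \<Rightarrow> 'a set \<Rightarrow> nat" where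
  "mU K p s s' = (if U_adj K p s s' then 1 else 0)"

definition adj :: "'a set set \<Rightarrow> nat \<Rightarrow> 'a set \<Rightarrow> 'a set \<Rightarrow> nat" where
  "adj K p s s' = mL K p s s' * (1 - mL K (p + 1) s s') *
      (1 - mU K (sdim s + sdim s' - p) s s')"

definition sigL_abs :: "'a set \<Rightarrow> 'a set \<Rightarrow> 'a set \<Rightarrow> nat" where
  "sigL_abs s s' t = (if t \<subseteq> s \<inter> s' then 1 else 0)"

end

theory Submission
  imports Defs
begin

lemma adj_if: "adj K p s s' = (if A_adj K p s s' then 1 else 0)"
  unfolding adj_def mL_def mU_def A_adj_def Lstar_adj_def by auto

lemma A_adj_sym: "A_adj K p s s' = A_adj K p s' s"
  unfolding A_adj_def Lstar_adj_def L_adj_def U_adj_def by (auto simp: add.commute)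

lemma sc_fin: "simplicial_complex K \<Longrightarrow> finite K"
  unfolding simplicial_complex_def by (elim conjE)

lemma sc_mem: "simplicial_complex K \<Longrightarrow> s \<in> K \<Longrightarrow> finite s \<and> s \<noteq> {}"
  unfolding simplicial_complex_def by (elim conjE) (erule bspec)

lemma sdim_le_cdim: "simplicial_complex K \<Longrightarrow> s \<in> K \<Longrightarrow> sdim s \<le> cdim K"
proof -
  assume K: "simplicial_complex K" and s: "s \<in> K"
  have "finite K" using K unfolding simplicial_complex_def by blast
  then show ?thesis unfolding cdim_def using s by simp
qed

lemma sum_layers:
  fixes f :: "'a set \<Rightarrow> 'b::comm_monoid_add"
  assumes K: "simplicial_complex K"
  shows "(\<Sum>q'=a..cdim K. \<Sum>s\<in>simplices K q'. f s) = (\<Sum>s\<in>{s\<in>K. a \<le> sdim s}. f s)"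
proof -
  have fin: "finite K" using K unfolding simplicial_complex_def by blast
  have eq: "{s\<in>K. a \<le> sdim s} = (\<Union>q'\<in>{a..cdim K}. simplices K q')"
  proof
    show "{s\<in>K. a \<le> sdim s} \<subseteq> (\<Union>q'\<in>{a..cdim K}. simplices K q')"
    proof
      fix s assume s: "s \<in> {s\<in>K. a \<le> sdim s}"
      then have sK: "s \<in> K" by simp
      have "s \<noteq> {}" "finite s" using sc_mem[OF K sK] by auto
      then have "card s = sdim s + 1" unfolding sdim_def
        by (metis Suc_eq_plus1 Suc_pred' card_gt_0_iff)
      moreover have "sdim s \<le> cdim K" using s sdim_le_cdim[OF K] by auto
      ultimately show "s \<in> (\<Union>q'\<in>{a..cdim K}. simplices K q')"
        using s unfolding simplices_def by auto
    qed
  next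
    show "(\<Union>q'\<in>{a..cdim K}. simplices K q') \<subseteq> {s\<in>K. a \<le> sdim s}"
      unfolding simplices_def sdim_def by auto
  qed
  have "(\<Sum>s\<in>(\<Union>q'\<in>{a..cdim K}. simplices K q'). f s) = (\<Sum>q'=a..cdim K. \<Sum>s\<in>simplices K q'. f s)"
    by (rule sum.UNION_disjoint) (use fin in \<open>auto simp: simplices_def\<close>)
  then show ?thesis using eq by simp
qed

lemma sum_ind:
  assumes "finite T" "B \<subseteq> T"
  shows "(\<Sum>s\<in>T. (if s \<in> B then 1 else 0 :: 'b::semiring_1)) = of_nat (card B)"
proof -
  have "(\<Sum>s\<in>T. (if s \<in> B then 1 else 0 :: 'b)) = (\<Sum>s\<in>B. (if s \<in> B then 1 else 0 :: 'b))"
    by (rule sum.mono_neutral_right) (use assms finite_subset in auto)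
  also have "\<dots> = (\<Sum>s\<in>B. 1)" by (rule sum.cong) auto
  finally show ?thesis by simp
qed

lemma int_if_lemma: "(x::nat) = (if P then 1 else 0) \<Longrightarrow> int x = (if P then 1 else 0)"
  by simp

theorem theoremt:
  fixes K :: "'a set set" and p q :: nat and \<sigma> :: "'a set"
  assumes "simplicial_complex K"
    and "\<sigma> \<in> simplices K q"
  shows "degA K p \<sigma> = (\<Sum>q'=p..cdim K. \<Sum>s'\<in>simplices K q'. adj K p \<sigma> s') \<and>
         int (degAstar K p \<sigma>) = int (degA K p \<sigma>) -
           (\<Sum>q'=p..cdim K. \<Sum>sk\<in>simplices K q'.
              int (min 1 (\<Sum>q''=q'+1..cdim K. \<Sum>sl\<in>simplices K q''.
                    sigL_abs sk sl sk * adj K p \<sigma> sl) * adj K p \<sigma> sk))"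
proof -
  note K = assms(1)
  have fin: "finite K" by (rule sc_fin[OF K])
  have fins: "\<And>s. s \<in> K \<Longrightarrow> finite s \<and> s \<noteq> {}" by (rule sc_mem[OF K])
  have card_sdim: "card s = sdim s + 1" if "s \<in> K" for s
    using fins[OF that] unfolding sdim_def
    by (metis Suc_eq_plus1 Suc_pred' card_gt_0_iff)
  define T where "T = {s\<in>K. p \<le> sdim s}"
  define B where "B = {s\<in>K. A_adj K p \<sigma> s}"
  define C where "C = {s\<in>K. Astar_adj K p s \<sigma>}"
  have BT: "B \<subseteq> T"
  proof
    fix s assume "s \<in> B"
    then have sK: "s \<in> K" and "L_adj K p \<sigma> s"
      unfolding B_def A_adj_def Lstar_adj_def by auto
    then obtain t where "t \<in> K" "card t = p + 1" "t \<subseteq> s" unfolding L_adj_def by auto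
    then have "p + 1 \<le> card s" using fins[OF sK] card_mono by metis
    then show "s \<in> T" using card_sdim[OF sK] sK unfolding T_def by auto
  qed
  have CB: "C \<subseteq> B" unfolding C_def B_def Astar_adj_def using A_adj_sym by blast
  have finT: "finite T" using fin unfolding T_def by auto
  have finB: "finite B" using fin unfolding B_def by auto
  have part1: "(\<Sum>q'=p..cdim K. \<Sum>s'\<in>simplices K q'. adj K p \<sigma> s') = card B"
  proof -
    have "(\<Sum>q'=p..cdim K. \<Sum>s'\<in>simplices K q'. adj K p \<sigma> s') = (\<Sum>s\<in>T. adj K p \<sigma> s)"
      unfolding T_def by (rule sum_layers[OF K])
    also have "\<dots> = (\<Sum>s\<in>T. if s \<in> B then 1 else 0)"
      by (rule sum.cong) (auto simp: adj_if B_def T_def)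
    also have "\<dots> = card B" using sum_ind[OF finT BT, where 'b=nat] by simp
    finally show ?thesis .
  qed
  have inner: "min 1 (\<Sum>q''=q'+1..cdim K. \<Sum>sl\<in>simplices K q''.
                    sigL_abs sk sl sk * adj K p \<sigma> sl) * adj K p \<sigma> sk
             = (if sk \<in> B - C then 1 else 0)" if sk: "sk \<in> simplices K q'" for sk q'
  proof -
    have skK: "sk \<in> K" and cs: "card sk = q' + 1" using sk unfolding simplices_def by auto
    have fsk: "finite sk" using fins[OF skK] by auto
    define S where "S = (\<Sum>sl\<in>{s\<in>K. q'+1 \<le> sdim s}. sigL_abs sk sl sk * adj K p \<sigma> sl)"
    have e1: "(\<Sum>q''=q'+1..cdim K. \<Sum>sl\<in>simplices K q''. sigL_abs sk sl sk * adj K p \<sigma> sl) = S"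
      unfolding S_def by (rule sum_layers[OF K])
    have e2: "(S \<noteq> 0) = (\<exists>sl\<in>K. sk \<subset> sl \<and> A_adj K p \<sigma> sl)"
    proof -
      have "(S \<noteq> 0) = (\<exists>sl\<in>{s\<in>K. q'+1 \<le> sdim s}. sigL_abs sk sl sk * adj K p \<sigma> sl \<noteq> 0)"
        unfolding S_def using fin by simp
      also have "\<dots> = (\<exists>sl\<in>K. sk \<subset> sl \<and> A_adj K p \<sigma> sl)"
      proof
        assume "\<exists>sl\<in>{s\<in>K. q'+1 \<le> sdim s}. sigL_abs sk sl sk * adj K p \<sigma> sl \<noteq> 0"
        then obtain sl where sl: "sl \<in> K" "q'+1 \<le> sdim sl" "sk \<subseteq> sl" "A_adj K p \<sigma> sl"
          by (auto simp: sigL_abs_def adj_if split: if_splits)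
        then have "card sk < card sl" using cs card_sdim[OF sl(1)] by simp
        then have "sk \<subset> sl" using sl(3) by auto
        then show "\<exists>sl\<in>K. sk \<subset> sl \<and> A_adj K p \<sigma> sl" using sl by auto
      next
        assume "\<exists>sl\<in>K. sk \<subset> sl \<and> A_adj K p \<sigma> sl"
        then obtain sl where sl: "sl \<in> K" "sk \<subset> sl" "A_adj K p \<sigma> sl" by auto
        then have "card sk < card sl" using fins[OF sl(1)] psubset_card_mono by blast
        then have "q'+1 \<le> sdim sl" using cs card_sdim[OF sl(1)] by simp
        then show "\<exists>sl\<in>{s\<in>K. q'+1 \<le> sdim s}. sigL_abs sk sl sk * adj K p \<sigma> sl \<noteq> 0"
          using sl by (auto simp: sigL_abs_def adj_if intro!: bexI[of _ sl])
      qed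
      finally show ?thesis .
    qed
    have symS: "\<And>s. A_adj K p s \<sigma> = A_adj K p \<sigma> s" by (rule A_adj_sym)
    have e3: "(sk \<in> B - C) = (A_adj K p \<sigma> sk \<and> (\<exists>sl\<in>K. sk \<subset> sl \<and> A_adj K p \<sigma> sl))"
      unfolding B_def C_def Astar_adj_def symS using skK by blast
    show ?thesis unfolding e1
    proof (cases "S = 0")
      case True
      then show "min 1 S * adj K p \<sigma> sk = (if sk \<in> B - C then 1 else 0)"
        using e2 e3 by simp
    next
      case False
      then have m: "min 1 S = 1" by simp
      show "min 1 S * adj K p \<sigma> sk = (if sk \<in> B - C then 1 else 0)"
        unfolding m using e2 e3 False by (simp add: adj_if)
    qed
  qed
  have part2: "(\<Sum>q'=p..cdim K. \<Sum>sk\<in>simplices K q'.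
              int (min 1 (\<Sum>q''=q'+1..cdim K. \<Sum>sl\<in>simplices K q''.
                    sigL_abs sk sl sk * adj K p \<sigma> sl) * adj K p \<sigma> sk))
      = (\<Sum>q'=p..cdim K. \<Sum>sk\<in>simplices K q'. (if sk \<in> B - C then 1 else 0))"
    proof (intro sum.cong refl)
    fix q' sk assume h: "sk \<in> simplices K q'"
    show "int (min 1 (\<Sum>q''=q'+1..cdim K. \<Sum>sl\<in>simplices K q''.
                    sigL_abs sk sl sk * adj K p \<sigma> sl) * adj K p \<sigma> sk)
        = (if sk \<in> B - C then 1 else 0)"
      by (rule int_if_lemma[OF inner[OF h]])
  qed
  also have "\<dots> = (\<Sum>s\<in>T. (if s \<in> B - C then 1 else 0))"
    unfolding T_def by (rule sum_layers[OF K])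
  also have "\<dots> = int (card (B - C))" using sum_ind[OF finT, of "B - C"] BT by auto
  also have "\<dots> = int (card B) - int (card C)"
    using CB finB by (simp add: card_Diff_subset finite_subset card_mono of_nat_diff)
  finally have part2: "(\<Sum>q'=p..cdim K. \<Sum>sk\<in>simplices K q'.
              int (min 1 (\<Sum>q''=q'+1..cdim K. \<Sum>sl\<in>simplices K q''.
                    sigL_abs sk sl sk * adj K p \<sigma> sl) * adj K p \<sigma> sk))
      = int (card B) - int (card C)" .
  have dA: "degA K p \<sigma> = card B" unfolding degA_def B_def ..
  have dC: "degAstar K p \<sigma> = card C" unfolding degAstar_def C_def ..
  show ?thesis unfolding dA dC part1 part2 by simp
qed

end
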